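(* Let $L$ be a finite-dimensional pure, nonnilpotent, solvable Lie algebra over $\mathbb{C}$ of breadth $2$ such that $\dim[L,L]=2$ and $\dim L^k=1$ for all integers $k\geq 2$. Then for some positive integer $n$, $L$ has a basis $\{x_1,x_2,z_1,z_2,\ldots,z_n,z\}$ such that one of the following holds: (1) $n$ is even and the only nonzero brackets of basis elements (up to antisymmetry) are $[x_1,x_2]=x_1$ and $[z_i,z_{i+1}]=z$ for all $i=1,3,5,\ldots,n-1$; or (2) $n$ is odd and the only nonzero brackets of basis elements (up to antisymmetry) are $[x_1,x_2]=x_1$, $[x_2,z_1]=z$ and $[z_i,z_{i+1}]=z$ for all $i=2,4,6,\ldots,n-1$.
   Context: For $x\in L$, the breadth of $x$ is $b(x)=\mathrm{rank}(\mathrm{ad}_x)$, and $b(L)=\max\{b(x)\mid x\in L\}$. $L$ is pure if it has no abelian ideal as a direct summand; equivalently $Z(L)\subseteq[L,L]$, where $Z(L)$ is the center. The lower central series is indexed by $L^0=L$, $L^1=[L,L]$ and $L^k=[L,L^{k-1}]$ for $k\geq 2$. *)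

theory Defs
  imports Complex_Main
begin

definition lie_algebra :: "(complex \<Rightarrow> 'a::ab_group_add \<Rightarrow> 'a) \<Rightarrow> ('a \<Rightarrow> 'a \<Rightarrow> 'a) \<Rightarrow> bool" where
  "lie_algebra sc br \<longleftrightarrow>
     vector_space sc \<and>
     (\<forall>x. Vector_Spaces.linear sc sc (br x)) \<and>
     (\<forall>y. Vector_Spaces.linear sc sc (\<lambda>x. br x y)) \<and>
     (\<forall>x. br x x = 0) \<and>
     (\<forall>x y z. br x (br y z) + br y (br z x) + br z (br x y) = 0)"

definition fin_dim :: "(complex \<Rightarrow> 'a::ab_group_add \<Rightarrow> 'a) \<Rightarrow> bool" where
  "fin_dim sc \<longleftrightarrow> (\<exists>B. finite B \<and> module.span sc B = UNIV)"

primrec lcs :: "(complex \<Rightarrow> 'a::ab_group_add \<Rightarrow> 'a) \<Rightarrow> ('a \<Rightarrow> 'a \<Rightarrow> 'a) \<Rightarrow> nat \<Rightarrow> 'a set" where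
  "lcs sc br 0 = UNIV"
| "lcs sc br (Suc k) = module.span sc {br x y | x y. y \<in> lcs sc br k}"

primrec derived :: "(complex \<Rightarrow> 'a::ab_group_add \<Rightarrow> 'a) \<Rightarrow> ('a \<Rightarrow> 'a \<Rightarrow> 'a) \<Rightarrow> nat \<Rightarrow> 'a set" where
  "derived sc br 0 = UNIV"
| "derived sc br (Suc k) = module.span sc {br x y | x y. x \<in> derived sc br k \<and> y \<in> derived sc br k}"

definition nilpotent_lie :: "(complex \<Rightarrow> 'a::ab_group_add \<Rightarrow> 'a) \<Rightarrow> ('a \<Rightarrow> 'a \<Rightarrow> 'a) \<Rightarrow> bool" where
  "nilpotent_lie sc br \<longleftrightarrow> (\<exists>k. lcs sc br k = {0})"

definition solvable_lie :: "(complex \<Rightarrow> 'a::ab_group_add \<Rightarrow> 'a) \<Rightarrow> ('a \<Rightarrow> 'a \<Rightarrow> 'a) \<Rightarrow> bool" where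
  "solvable_lie sc br \<longleftrightarrow> (\<exists>k. derived sc br k = {0})"

definition lie_ideal :: "(complex \<Rightarrow> 'a::ab_group_add \<Rightarrow> 'a) \<Rightarrow> ('a \<Rightarrow> 'a \<Rightarrow> 'a) \<Rightarrow> 'a set \<Rightarrow> bool" where
  "lie_ideal sc br I \<longleftrightarrow> module.subspace sc I \<and> (\<forall>x y. y \<in> I \<longrightarrow> br x y \<in> I)"

definition pure_lie :: "(complex \<Rightarrow> 'a::ab_group_add \<Rightarrow> 'a) \<Rightarrow> ('a \<Rightarrow> 'a \<Rightarrow> 'a) \<Rightarrow> bool" where
  "pure_lie sc br \<longleftrightarrow>
     \<not> (\<exists>I J. lie_ideal sc br I \<and> lie_ideal sc br J \<and> I \<noteq> {0} \<and>
             (\<forall>x\<in>I. \<forall>y\<in>I. br x y = 0) \<and>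
             I \<inter> J = {0} \<and> {a + b | a b. a \<in> I \<and> b \<in> J} = UNIV)"

definition breadth_elem :: "(complex \<Rightarrow> 'a::ab_group_add \<Rightarrow> 'a) \<Rightarrow> ('a \<Rightarrow> 'a \<Rightarrow> 'a) \<Rightarrow> 'a \<Rightarrow> nat" where
  "breadth_elem sc br x = vector_space.dim sc (range (br x))"

definition breadth :: "(complex \<Rightarrow> 'a::ab_group_add \<Rightarrow> 'a) \<Rightarrow> ('a \<Rightarrow> 'a \<Rightarrow> 'a) \<Rightarrow> nat" where
  "breadth sc br = Max (range (breadth_elem sc br))"

end

theory Submission
  imports Defs
begin


locale lie = finite_dimensional_vector_space scale Basis
  for scale :: "complex \<Rightarrow> 'a::ab_group_add \<Rightarrow> 'a" (infixr \<open>*s\<close> 75) and Basis +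
  fixes br :: "'a \<Rightarrow> 'a \<Rightarrow> 'a"
  assumes br_addR: "br x (y + y') = br x y + br x y'"
  and br_scaleR: "br x (c *s y) = c *s br x y"
  and br_addL: "br (x + x') y = br x y + br x' y"
  and br_scaleL: "br (c *s x) y = c *s br x y"
  and br_alt: "br x x = 0"
  and jacobi: "br x (br y t) + br y (br t x) + br t (br x y) = 0"
begin

lemma br_zeroR[simp]: "br x 0 = 0"
proof -
  have "br x (0 + 0) = br x 0 + br x 0" by (rule br_addR)
  then show ?thesis by simp
qed
lemma br_zeroL[simp]: "br 0 x = 0"
proof -
  have "br (0 + 0) x = br 0 x + br 0 x" by (rule br_addL)
  then show ?thesis by simp
qed
lemma br_negR: "br x (- y) = - br x y"
proof -
  have "br x (- y + y) = br x (- y) + br x y" by (rule br_addR)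
  then have "br x (- y) + br x y = 0" by simp
  then show ?thesis by (simp only: eq_neg_iff_add_eq_0)
qed
lemma br_negL: "br (- x) y = - br x y"
proof -
  have "br (- x + x) y = br (- x) y + br x y" by (rule br_addL)
  then have "br (- x) y + br x y = 0" by simp
  then show ?thesis by (simp only: eq_neg_iff_add_eq_0)
qed
lemma br_diffR: "br x (y - y') = br x y - br x y'"
  by (simp only: diff_conv_add_uminus br_addR br_negR)
lemma br_diffL: "br (x - x') y = br x y - br x' y"
  by (simp only: diff_conv_add_uminus br_addL br_negL)
lemma br_anti: "br y x = - br x y"
proof -
  have "br (x + y) (x + y) = 0" by (rule br_alt)
  moreover have "br (x + y) (x + y) = br x x + br x y + (br y x + br y y)"
    by (simp only: br_addL br_addR add_ac)
  ultimately have "br x y + br y x = 0" by (simp add: br_alt)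
  then show ?thesis by (simp add: add_eq_0_iff)
qed

lemmas brs = br_addR br_scaleR br_addL br_scaleL br_alt br_negR br_negL br_diffR br_diffL

lemma hom_preimage_subspace:
  assumes "\<And>x y. T (x + y) = T x + T y" "\<And>c x. T (c *s x) = c *s T x" "subspace U"
  shows "subspace {x. T x \<in> U}"
proof -
  have "T 0 = 0" by (metis add_cancel_right_right assms(1))
  then show ?thesis using assms(3) unfolding subspace_def by (auto simp: assms(1,2))
qed

lemma hom_kernel_subspace:
  assumes "\<And>x y. T (x + y) = T x + T y" "\<And>c x. T (c *s x) = c *s T x"
  shows "subspace {x. T x = 0}"
  using hom_preimage_subspace[OF assms, of "{0}"] by (simp add: subspace_def)

lemma hom_zero_on_span:
  assumes "\<And>x y. T (x + y) = T x + T y" "\<And>c x. T (c *s x) = c *s T x"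
    and "\<forall>s\<in>S. T s = 0" "y \<in> span S"
  shows "T y = 0"
  using span_minimal[of S "{x. T x = 0}"] hom_kernel_subspace[OF assms(1,2)] assms(3,4) by auto

lemma indep_ins:
  assumes "independent S" "\<And>x y. T (x + y) = T x + T y" "\<And>c x. T (c *s x) = c *s T x"
    and "\<forall>s\<in>S. T s = 0" "T x \<noteq> 0"
  shows "independent (insert x S) \<and> x \<notin> S"
proof -
  have nx: "x \<notin> span S"
  proof
    assume "x \<in> span S"
    then have "T x = 0" by (rule hom_zero_on_span[OF assms(2,3,4)])
    with assms(5) show False by simp
  qed
  have "x \<notin> S" using nx span_base[of x S] by blast
  then show ?thesis using independent_insertI[OF nx assms(1)] by blast
qed

lemma in_span1: "y \<in> span {x} \<Longrightarrow> \<exists>c. y = c *s x"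
  by (auto simp: span_singleton)

lemma in_span2: assumes "y \<in> span {x, x'}" shows "\<exists>c c'. y = c *s x + c' *s x'"
proof -
  obtain c where "y - c *s x \<in> span {x'}" using assms span_breakdown_eq by blast
  then obtain c' where "y - c *s x = c' *s x'" using in_span1 by blast
  then have "y = c *s x + c' *s x'" by (simp add: algebra_simps)
  then show ?thesis by blast
qed

definition Inv :: "'a \<Rightarrow> 'a \<Rightarrow> 'a set \<Rightarrow> bool" where
"Inv z a V \<longleftrightarrow> subspace V \<and> z \<in> V \<and> (\<forall>k\<in>V. br a k \<in> span {z}) \<and>
   (\<forall>k\<in>V. \<forall>k'\<in>V. br k k' \<in> span {z}) \<and>
   (\<forall>k\<in>V. br a k = 0 \<and> (\<forall>k'\<in>V. br k k' = 0) \<longrightarrow> k \<in> span {z})"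

definition pairsOK :: "'a \<Rightarrow> 'a \<Rightarrow> 'a set \<Rightarrow> nat \<Rightarrow> (nat \<Rightarrow> 'a) \<Rightarrow> (nat \<Rightarrow> 'a) \<Rightarrow> bool" where
"pairsOK z a' V m P Q \<longleftrightarrow>
  (\<forall>j<m. P j \<in> V \<and> Q j \<in> V \<and> br (P j) (Q j) = z \<and> br a' (P j) = 0 \<and> br a' (Q j) = 0) \<and>
  (\<forall>j<m. \<forall>k<m. br (P j) (P k) = 0 \<and> br (Q j) (Q k) = 0 \<and> (j \<noteq> k \<longrightarrow> br (P j) (Q k) = 0))"

definition Res :: "'a \<Rightarrow> 'a \<Rightarrow> 'a set \<Rightarrow> bool" where
"Res z a V \<longleftrightarrow> (\<exists>a' m P Q. a' - a \<in> V \<and> pairsOK z a' V m P Q \<and>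
   (V = span (insert z (P ` {..<m} \<union> Q ` {..<m})) \<or>
    (\<exists>z1\<in>V. br a' z1 = - z \<and> (\<forall>j<m. br z1 (P j) = 0 \<and> br z1 (Q j) = 0) \<and>
       V = span (insert z1 (insert z (P ` {..<m} \<union> Q ` {..<m}))))))"

lemma base_case:
  assumes zc: "\<forall>y. br y z = 0" and z0: "z \<noteq> 0" and I: "Inv z a V"
    and ab: "\<forall>k\<in>V. \<forall>k'\<in>V. br k k' = 0"
  shows "Res z a V"
proof -
  have sV: "subspace V" and zV: "z \<in> V" and aV: "\<forall>k\<in>V. br a k \<in> span {z}"
    and rad: "\<forall>k\<in>V. br a k = 0 \<longrightarrow> k \<in> span {z}"
    using I ab unfolding Inv_def by auto
  have pz: "pairsOK z a V 0 P Q" for P Q unfolding pairsOK_def by simp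
  show ?thesis
  proof (cases "\<forall>k\<in>V. br a k = 0")
    case True
    then have "V = span {z}"
      using rad zV sV span_minimal[of "{z}" V] by auto
    moreover have "a - a \<in> V" using subspace_0[OF sV] by simp
    ultimately show ?thesis unfolding Res_def using pz[of "\<lambda>_. z" "\<lambda>_. z"]
      by (intro exI[of _ a] exI[of _ 0] exI[of _ "\<lambda>_. z"]) simp
  next
    case False
    then obtain k0 where k0: "k0 \<in> V" "br a k0 \<noteq> 0" by auto
    then obtain c where c: "br a k0 = c *s z" using aV in_span1 by blast
    with k0 have c0: "c \<noteq> 0" by auto
    define z1 where "z1 = (- inverse c) *s k0"
    have z1V: "z1 \<in> V" unfolding z1_def by (rule subspace_scale[OF sV k0(1)])
    have az1: "br a z1 = - z"
      using c0 by (simp add: z1_def br_scaleR br_negR c)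
    have "V \<subseteq> span (insert z1 (insert z {}))"
    proof
      fix v assume vV: "v \<in> V"
      then obtain d where d: "br a v = d *s z" using aV in_span1 by blast
      have "v + d *s z1 \<in> V" using vV z1V by (intro subspace_add[OF sV] subspace_scale[OF sV])
      moreover have "br a (v + d *s z1) = 0" by (simp add: br_addR br_scaleR d az1)
      ultimately have "v + d *s z1 \<in> span {z}" using rad by auto
      then have "v + d *s z1 \<in> span {z1, z}" using span_mono[of "{z}" "{z1,z}"] by auto
      moreover have "d *s z1 \<in> span {z1, z}" by (simp add: span_base span_scale)
      ultimately have "(v + d *s z1) - d *s z1 \<in> span {z1, z}" using span_diff by blast
      then show "v \<in> span (insert z1 (insert z {}))" by simp
    qed
    moreover have "span (insert z1 (insert z {})) \<subseteq> V"
      using span_minimal[of "{z1, z}" V] sV z1V zV by auto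
    ultimately have "V = span (insert z1 (insert z {}))" by auto
    moreover have "a - a \<in> V" using subspace_0[OF sV] by simp
    ultimately show ?thesis unfolding Res_def using pz[of "\<lambda>_. z" "\<lambda>_. z"] z1V az1
      by (intro exI[of _ a] exI[of _ 0] exI[of _ "\<lambda>_. z"]) auto
  qed
qed

lemma step_case:
  assumes zc: "\<forall>y. br y z = 0" and z0: "z \<noteq> 0" and I: "Inv z a V"
    and pV: "p \<in> V" and qV: "q \<in> V" and pq: "br p q = z"
    and IH: "\<And>a V'. Inv z a V' \<Longrightarrow> dim V' < dim V \<Longrightarrow> Res z a V'"
  shows "Res z a V"
proof -
  have sV: "subspace V" and zV: "z \<in> V" and aV: "\<forall>k\<in>V. br a k \<in> span {z}"
    and cV: "\<forall>k\<in>V. \<forall>k'\<in>V. br k k' \<in> span {z}"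
    and rad: "\<forall>k\<in>V. br a k = 0 \<and> (\<forall>k'\<in>V. br k k' = 0) \<longrightarrow> k \<in> span {z}"
    using I unfolding Inv_def by auto
  obtain \<alpha> where al: "br a p = \<alpha> *s z" using aV pV in_span1 by blast
  obtain \<beta> where be: "br a q = \<beta> *s z" using aV qV in_span1 by blast
  define u where "u = \<beta> *s p - \<alpha> *s q"
  define a1 where "a1 = a - u"
  have uV: "u \<in> V" unfolding u_def using sV pV qV by (intro subspace_diff subspace_scale)
  have qp: "br q p = - z" using pq br_anti[of q p] by simp
  have a1p: "br a1 p = 0" by (simp add: a1_def u_def brs qp al)
  have a1q: "br a1 q = 0" by (simp add: a1_def u_def brs pq be)
  define V' where "V' = {k\<in>V. br p k = 0 \<and> br q k = 0}"
  have V'eq: "V' = V \<inter> {k. br p k = 0} \<inter> {k. br q k = 0}" unfolding V'_def by auto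
  have sV': "subspace V'" unfolding V'eq
    by (intro subspace_inter sV hom_kernel_subspace br_addR br_scaleR)
  have zV': "z \<in> V'" using zc zV unfolding V'_def by auto
  have V'V: "V' \<subseteq> V" unfolding V'_def by auto
  have pV': "p \<notin> V'" using qp z0 unfolding V'_def by auto
  have dimlt: "dim V' < dim V"
  proof -
    have e1: "span V' = V'" and e2: "span V = V" using sV sV' by simp_all
    have "span V' \<subset> span V" unfolding e1 e2 using V'V pV' pV by auto
    then show ?thesis by (rule dim_psubset)
  qed
  have decomp: "\<exists>s t. v + t *s p - s *s q \<in> V' \<and> br p v = s *s z \<and> br q v = t *s z" if vV: "v \<in> V" for v
  proof -
    obtain s where s: "br p v = s *s z" using cV pV vV in_span1 by blast
    obtain t where t: "br q v = t *s z" using cV qV vV in_span1 by blast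
    have "v + t *s p - s *s q \<in> V" using sV vV pV qV
      by (intro subspace_diff subspace_add subspace_scale)
    moreover have "br p (v + t *s p - s *s q) = 0" by (simp add: brs s pq)
    moreover have "br q (v + t *s p - s *s q) = 0" by (simp add: brs t qp)
    ultimately show ?thesis using s t unfolding V'_def by blast
  qed
  have IV': "Inv z a1 V'"
    unfolding Inv_def
  proof (intro conjI ballI impI sV' zV')
    fix k assume kV': "k \<in> V'"
    then have "br u k = 0" unfolding V'_def u_def by (simp add: brs)
    then have "br a1 k = br a k" by (simp add: a1_def brs)
    then show "br a1 k \<in> span {z}" using kV' V'V aV by auto
  next
    fix k k' assume "k \<in> V'" "k' \<in> V'"
    then show "br k k' \<in> span {z}" using V'V cV by auto
  next
    fix k assume kV': "k \<in> V'" and h: "br a1 k = 0 \<and> (\<forall>k'\<in>V'. br k k' = 0)"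
    have bu: "br u k = 0" using kV' unfolding V'_def u_def by (simp add: brs)
    have "br a k = 0" using h bu by (simp add: a1_def brs)
    moreover have "\<forall>v\<in>V. br k v = 0"
    proof
      fix v assume vV: "v \<in> V"
      then obtain s t where st: "v + t *s p - s *s q \<in> V'" using decomp by blast
      have kp: "br k p = 0" using kV' br_anti[of k p] unfolding V'_def by auto
      have kq: "br k q = 0" using kV' br_anti[of k q] unfolding V'_def by auto
      have "br k (v + t *s p - s *s q) = 0" using h st by auto
      then show "br k v = 0" by (simp add: brs kp kq)
    qed
    ultimately show "k \<in> span {z}" using rad kV' V'V by auto
  qed
  then obtain a' m P Q where a': "a' - a1 \<in> V'" and po: "pairsOK z a' V' m P Q"
    and disj: "V' = span (insert z (P ` {..<m} \<union> Q ` {..<m})) \<or>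
      (\<exists>z1\<in>V'. br a' z1 = - z \<and> (\<forall>j<m. br z1 (P j) = 0 \<and> br z1 (Q j) = 0) \<and>
       V' = span (insert z1 (insert z (P ` {..<m} \<union> Q ` {..<m}))))"
    using IH dimlt unfolding Res_def by blast
  define P' where "P' = P(m := p)"
  define Q' where "Q' = Q(m := q)"
  have img: "P' ` {..<Suc m} \<union> Q' ` {..<Suc m} = insert p (insert q (P ` {..<m} \<union> Q ` {..<m}))"
    unfolding P'_def Q'_def by (auto simp: lessThan_Suc)
  have a'a: "a' - a \<in> V"
  proof -
    have e: "a' - a = (a' - a1) - u" by (simp add: a1_def)
    have "(a' - a1) - u \<in> V" using subspace_diff[OF sV, of "a' - a1" u] a' V'V uV by auto
    then show ?thesis unfolding e .
  qed
  have a'p: "br a' p = 0" and a'q: "br a' q = 0"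
  proof -
    have "a' = a1 + (a' - a1)" by simp
    then have e: "br a' x = br a1 x + br (a' - a1) x" for x by (metis br_addL)
    have "br (a' - a1) p = 0" using a' br_anti[of "a' - a1" p] unfolding V'_def by auto
    then show "br a' p = 0" using e a1p by simp
    have "br (a' - a1) q = 0" using a' br_anti[of "a' - a1" q] unfolding V'_def by auto
    then show "br a' q = 0" using e a1q by simp
  qed
  have A1: "\<forall>j<Suc m. P' j \<in> V \<and> Q' j \<in> V \<and> br (P' j) (Q' j) = z \<and> br a' (P' j) = 0 \<and> br a' (Q' j) = 0"
    using po V'V pV qV pq a'p a'q unfolding pairsOK_def P'_def Q'_def
    by (auto simp: less_Suc_eq)
  have A2: "\<forall>j<Suc m. \<forall>k<Suc m. br (P' j) (P' k) = 0 \<and> br (Q' j) (Q' k) = 0 \<and> (j \<noteq> k \<longrightarrow> br (P' j) (Q' k) = 0)"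
  proof (intro allI impI)
    fix j k assume j: "j < Suc m" and k: "k < Suc m"
    have PV: "\<And>i. i < m \<Longrightarrow> br p (P i) = 0 \<and> br q (P i) = 0 \<and> br p (Q i) = 0 \<and> br q (Q i) = 0"
      using po unfolding pairsOK_def V'_def by auto
    have PV2: "\<And>i. i < m \<Longrightarrow> br (P i) p = 0 \<and> br (P i) q = 0 \<and> br (Q i) p = 0 \<and> br (Q i) q = 0"
      using PV br_anti by (metis neg_0_equal_iff_equal)
    have old: "j < m \<Longrightarrow> k < m \<Longrightarrow> br (P j) (P k) = 0 \<and> br (Q j) (Q k) = 0 \<and> (j \<noteq> k \<longrightarrow> br (P j) (Q k) = 0)"
      using po unfolding pairsOK_def by auto
    show "br (P' j) (P' k) = 0 \<and> br (Q' j) (Q' k) = 0 \<and> (j \<noteq> k \<longrightarrow> br (P' j) (Q' k) = 0)"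
      using j k PV PV2 old unfolding P'_def Q'_def
      by (auto simp: less_Suc_eq br_alt)
  qed
  have po': "pairsOK z a' V (Suc m) P' Q'" unfolding pairsOK_def using A1 A2 by blast
  have spanlift: "V = span (insert p (insert q H))" if H: "V' = span H" "H \<subseteq> V" for H
  proof
    show "span (insert p (insert q H)) \<subseteq> V" using span_minimal[OF _ sV] H pV qV by auto
    show "V \<subseteq> span (insert p (insert q H))"
    proof
      fix v assume vV: "v \<in> V"
      then obtain s t where st: "v + t *s p - s *s q \<in> V'" using decomp by blast
      let ?S = "span (insert p (insert q H))"
      have "v + t *s p - s *s q \<in> ?S" using st H span_mono[of H "insert p (insert q H)"] by auto
      moreover have "t *s p \<in> ?S" "s *s q \<in> ?S" by (auto intro: span_scale span_base)
      ultimately have "(v + t *s p - s *s q) - t *s p + s *s q \<in> ?S"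
        using span_add span_diff by blast
      moreover have "(v + t *s p - s *s q) - t *s p + s *s q = v" by (simp add: algebra_simps)
      ultimately show "v \<in> ?S" by simp
    qed
  qed
  have GV: "P ` {..<m} \<union> Q ` {..<m} \<subseteq> V" using po V'V unfolding pairsOK_def by auto
  from disj show ?thesis
  proof
    assume h: "V' = span (insert z (P ` {..<m} \<union> Q ` {..<m}))"
    have "V = span (insert p (insert q (insert z (P ` {..<m} \<union> Q ` {..<m}))))"
      using spanlift[OF h] GV zV by auto
    then have "V = span (insert z (P' ` {..<Suc m} \<union> Q' ` {..<Suc m}))"
      unfolding img by (simp add: insert_commute)
    then show ?thesis unfolding Res_def using a'a po' by blast
  next
    assume "\<exists>z1\<in>V'. br a' z1 = - z \<and> (\<forall>j<m. br z1 (P j) = 0 \<and> br z1 (Q j) = 0) \<and>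
       V' = span (insert z1 (insert z (P ` {..<m} \<union> Q ` {..<m})))"
    then obtain z1 where z1: "z1 \<in> V'" "br a' z1 = - z" "\<forall>j<m. br z1 (P j) = 0 \<and> br z1 (Q j) = 0"
      and h: "V' = span (insert z1 (insert z (P ` {..<m} \<union> Q ` {..<m})))" by blast
    have "V = span (insert p (insert q (insert z1 (insert z (P ` {..<m} \<union> Q ` {..<m})))))"
      using spanlift[OF h] GV zV z1 V'V by auto
    then have "V = span (insert z1 (insert z (P' ` {..<Suc m} \<union> Q' ` {..<Suc m})))"
      unfolding img by (simp add: insert_commute)
    moreover have "\<forall>j<Suc m. br z1 (P' j) = 0 \<and> br z1 (Q' j) = 0"
    proof -
      have "br z1 p = 0" "br z1 q = 0" using z1(1) br_anti[of z1 p] br_anti[of z1 q]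
        unfolding V'_def by auto
      then show ?thesis using z1(3) unfolding P'_def Q'_def by (auto simp: less_Suc_eq)
    qed
    ultimately show ?thesis unfolding Res_def using a'a po' z1 V'V by blast
  qed
qed

lemma main_ind:
  assumes zc: "\<forall>y. br y z = 0" and z0: "z \<noteq> 0"
  shows "Inv z a V \<Longrightarrow> Res z a V"
proof (induction "dim V" arbitrary: a V rule: less_induct)
  case less
  show ?case
  proof (cases "\<forall>k\<in>V. \<forall>k'\<in>V. br k k' = 0")
    case True
    then show ?thesis using base_case[OF zc z0 less.prems] by blast
  next
    case False
    then obtain k k' where kV: "k \<in> V" "k' \<in> V" "br k k' \<noteq> 0" by blast
    have sV: "subspace V" and cV: "\<forall>k\<in>V. \<forall>k'\<in>V. br k k' \<in> span {z}"
      using less.prems unfolding Inv_def by auto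
    obtain c where c: "br k k' = c *s z" using cV kV in_span1 by blast
    with kV have c0: "c \<noteq> 0" by auto
    have qV: "inverse c *s k' \<in> V" using sV kV by (intro subspace_scale)
    have pq: "br k (inverse c *s k') = z" using c0 by (simp add: br_scaleR c)
    show ?thesis
      by (rule step_case[OF zc z0 less.prems kV(1) qV pq]) (rule less.hyps)
  qed
qed

lemma pairs_indep:
  assumes S: "independent S" "finite S" and z0: "z \<noteq> 0"
    and pq: "\<forall>j<m. br (P j) (Q j) = z"
    and PS: "\<forall>j<m. \<forall>y\<in>S. br (P j) y = 0 \<and> br (Q j) y = 0"
    and cr: "\<forall>j<m. \<forall>k<m. br (P j) (P k) = 0 \<and> br (Q j) (Q k) = 0 \<and> (j \<noteq> k \<longrightarrow> br (P j) (Q k) = 0)"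
  shows "independent (S \<union> P ` {..<m} \<union> Q ` {..<m}) \<and> card (S \<union> P ` {..<m} \<union> Q ` {..<m}) = card S + 2 * m"
  using pq PS cr
proof (induction m)
  case 0
  then show ?case using S by simp
next
  case (Suc m)
  let ?S' = "S \<union> P ` {..<m} \<union> Q ` {..<m}"
  have IH: "independent ?S' \<and> card ?S' = card S + 2 * m"
    using Suc.IH Suc.prems by auto
  have fin: "finite ?S'" using S by auto
  have pmqm: "br (P m) (Q m) = z" using Suc.prems by auto
  have qmpm: "br (Q m) (P m) = - z" using pmqm br_anti[of "Q m" "P m"] by simp
  have T1: "\<forall>y\<in>?S'. br (P m) y = 0"
    using Suc.prems by (auto simp: less_Suc_eq)
  have i1: "independent (insert (Q m) ?S') \<and> Q m \<notin> ?S'"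
    by (rule indep_ins[OF conjunct1[OF IH], of "br (P m)"]) (auto simp: br_addR br_scaleR T1 pmqm z0)
  have T2: "\<forall>y\<in>insert (Q m) ?S'. br (Q m) y = 0"
  proof
    fix y assume y: "y \<in> insert (Q m) ?S'"
    have a: "\<forall>k<m. br (P k) (Q m) = 0" using Suc.prems by auto
    have "\<forall>k<m. br (Q m) (P k) = 0" using a br_anti by (metis neg_0_equal_iff_equal)
    then show "br (Q m) y = 0" using y Suc.prems by (auto simp: less_Suc_eq br_alt)
  qed
  have i2: "independent (insert (P m) (insert (Q m) ?S')) \<and> P m \<notin> insert (Q m) ?S'"
    by (rule indep_ins[OF conjunct1[OF i1], of "br (Q m)"]) (auto simp: br_addR br_scaleR T2 qmpm z0)
  have eq: "S \<union> P ` {..<Suc m} \<union> Q ` {..<Suc m} = insert (P m) (insert (Q m) ?S')"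
    by (auto simp: lessThan_Suc)
  show ?case unfolding eq using i1 i2 IH fin by simp
qed

lemma central_in_span:
  assumes pure: "pure_lie scale br" and brE: "\<forall>x y. br x y \<in> span E"
    and kc: "\<forall>y. br k y = 0"
  shows "k \<in> span E"
proof (rule ccontr)
  assume kE: "k \<notin> span E"
  obtain E0 where E0: "E0 \<subseteq> span E" "independent E0" "span E \<subseteq> span E0"
    using maximal_independent_subset[of "span E"] by blast
  have "span E0 \<subseteq> span E" using span_mono[OF E0(1)] by (simp only: span_span)
  then have sE0: "span E0 = span E" using E0(3) by (rule antisym)
  have kE0s: "k \<notin> span E0" using kE sE0 by simp
  have k0: "k \<noteq> 0" using kE span_zero[of E] by metis
  have ind: "independent (insert k E0)" by (rule independent_insertI[OF kE0s E0(2)])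
  define B where "B = extend_basis (insert k E0)"
  have kB: "insert k E0 \<subseteq> B" unfolding B_def by (rule extend_basis_superset[OF ind])
  have iB: "independent B" unfolding B_def by (rule independent_extend_basis[OF ind])
  have sB: "span B = UNIV" unfolding B_def by (rule span_extend_basis[OF ind])
  have kE0: "k \<notin> E0" using kE0s span_base[of k E0] by blast
  define J where "J = span (B - {k})"
  define I where "I = span {k}"
  have E0J: "E0 \<subseteq> B - {k}" using kB kE0 by blast
  have EJ: "span E \<subseteq> J" unfolding J_def sE0[symmetric] by (rule span_mono[OF E0J])
  have Ik: "\<And>y. y \<in> I \<Longrightarrow> \<exists>c. y = c *s k" unfolding I_def by (rule in_span1)
  have idI: "lie_ideal scale br I"
    unfolding lie_ideal_def
  proof (intro conjI allI impI)
    show "subspace I" unfolding I_def by (rule subspace_span)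
    fix x y assume "y \<in> I"
    then obtain c where c: "y = c *s k" using Ik by blast
    have "br k x = 0" using kc by simp
    then have "br x k = 0" using br_anti[of x k] by simp
    then have "br x y = 0" unfolding c by (simp add: br_scaleR)
    then show "br x y \<in> I" unfolding I_def using span_zero by simp
  qed
  have idJ: "lie_ideal scale br J"
    unfolding lie_ideal_def
  proof (intro conjI allI impI)
    show "subspace J" unfolding J_def by (rule subspace_span)
    fix x y
    have "br x y \<in> span E" using brE by simp
    then show "br x y \<in> J" by (rule subsetD[OF EJ])
  qed
  have kI: "k \<in> I" unfolding I_def by (rule span_base) simp
  have I0: "I \<noteq> {0}" using kI k0 by blast
  have Iab: "\<forall>x\<in>I. \<forall>y\<in>I. br x y = 0"
  proof (intro ballI)
    fix x y assume "x \<in> I" "y \<in> I"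
    then obtain c where "x = c *s k" using Ik by blast
    then show "br x y = 0" using kc by (simp add: br_scaleL)
  qed
  have IJ: "I \<inter> J = {0}"
  proof
    have "0 \<in> I" "0 \<in> J" unfolding I_def J_def by (rule span_zero)+
    then show "{0} \<subseteq> I \<inter> J" by blast
    show "I \<inter> J \<subseteq> {0}"
    proof
      fix y assume y: "y \<in> I \<inter> J"
      then obtain c where c: "y = c *s k" using Ik by blast
      show "y \<in> {0}"
      proof (cases "c = 0")
        case True then show ?thesis using c by simp
      next
        case False
        have "inverse c *s y \<in> J" using y unfolding J_def by (intro span_scale) blast
        moreover have "inverse c *s y = k" using False c by simp
        ultimately have "k \<in> span (B - {k})" unfolding J_def by simp
        moreover have "k \<in> B" using kB by blast
        ultimately have "dependent B" unfolding dependent_def by blast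
        then show ?thesis using iB by contradiction
      qed
    qed
  qed
  have sum: "{a + b |a b. a \<in> I \<and> b \<in> J} = UNIV"
  proof (intro set_eqI iffI)
    fix y :: 'a
    have Bk: "insert k (B - {k}) = B" using kB by blast
    have "y \<in> span (insert k (B - {k}))" unfolding Bk sB by simp
    then obtain c where c: "y - c *s k \<in> span (B - {k})" using span_breakdown_eq by blast
    have cI: "c *s k \<in> I" using kI unfolding I_def by (rule span_scale)
    have "y = c *s k + (y - c *s k)" by simp
    then show "y \<in> {a + b |a b. a \<in> I \<and> b \<in> J}" using cI c unfolding J_def by blast
  qed simp
  show False using pure idI idJ I0 Iab IJ sum unfolding pure_lie_def by blast
qed

end


context lie begin

lemma lie_setup:
  assumes pure: "pure_lie scale br" and d1: "dim (lcs scale br 1) = 2"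
    and d2: "dim (lcs scale br 2) = 1" and d3: "dim (lcs scale br 3) = 1"
  obtains a w z V0 where "w \<noteq> 0" "z \<noteq> 0" "z \<notin> span {w}" "br a w = w" "\<forall>y. br y z = 0"
    "\<forall>x y. br x y \<in> span {z, w}" "\<forall>x. br x w \<in> span {w}"
    "V0 = {k. br k w = 0 \<and> br a k \<in> span {z}}" "Inv z a V0"
    "\<forall>y. \<exists>\<phi> s y2. y2 \<in> V0 \<and> y = \<phi> *s a + s *s w + y2"
    "z \<in> span {br x y |x y. True}"
proof -
  define D where "D = span {br x y |x y. True}"
  define L2 where "L2 = span {br x y |x y. y \<in> D}"
  define L3 where "L3 = span {br x y |x y. y \<in> L2}"
  have l1: "lcs scale br 1 = D" unfolding D_def by simp
  have l2: "lcs scale br 2 = L2" unfolding L2_def D_def by (simp add: numeral_2_eq_2)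
  have l3: "lcs scale br 3 = L3" unfolding L3_def L2_def D_def by (simp add: numeral_3_eq_3 numeral_2_eq_2)
  have dD: "dim D = 2" using d1 unfolding l1 .
  have dL2: "dim L2 = 1" using d2 unfolding l2 .
  have dL3: "dim L3 = 1" using d3 unfolding l3 .
  have brD: "\<And>x y. br x y \<in> D" unfolding D_def by (rule span_base) auto
  have sD: "subspace D" unfolding D_def by simp
  have L2D: "L2 \<subseteq> D" unfolding L2_def using brD sD by (intro span_minimal) auto
  have brL2: "\<And>x y. y \<in> D \<Longrightarrow> br x y \<in> L2" unfolding L2_def by (rule span_base) auto
  obtain B2 where B2: "B2 \<subseteq> L2" "independent B2" "L2 \<subseteq> span B2" "card B2 = dim L2"
    using basis_exists by blast
  then obtain w where B2w: "B2 = {w}" using dL2 card_1_singleton_iff[of B2] by (auto simp del: One_nat_def)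
  have w0: "w \<noteq> 0" using B2 B2w by auto
  have wL2: "w \<in> L2" using B2 B2w by auto
  have L2w: "L2 = span {w}"
    using B2 B2w span_minimal[of "{w}" L2] wL2 unfolding L2_def by auto
  have wD: "w \<in> D" using wL2 L2D by auto
  have brw: "\<And>x. br x w \<in> span {w}" using brL2[OF wD] L2w by auto
  have "\<exists>x y. y \<in> L2 \<and> br x y \<noteq> 0"
  proof (rule ccontr)
    assume "\<not> ?thesis"
    then have "{br x y |x y. y \<in> L2} \<subseteq> {0}" by auto
    then have "L3 \<subseteq> span {0}" unfolding L3_def by (rule span_mono)
    then have "L3 \<subseteq> {0}" by simp
    then have "dim L3 \<le> dim {0::'a}" by (rule dim_subset)
    then show False using dL3 by simp
  qed
  then obtain x y where xy: "y \<in> L2" "br x y \<noteq> 0" by blast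
  obtain c where c: "y = c *s w" using xy L2w in_span1 by blast
  have xw0: "br x w \<noteq> 0" using xy c by (auto simp: br_scaleR)
  obtain d where d: "br x w = d *s w" using brw in_span1 by blast
  have d0: "d \<noteq> 0" using xw0 d by auto
  define a where "a = inverse d *s x"
  have aw: "br a w = w" unfolding a_def using d0 by (simp add: br_scaleL d)
  have "\<exists>v\<in>D. v \<notin> span {w}"
  proof (rule ccontr)
    assume "\<not> ?thesis"
    then have "D \<subseteq> span {w}" by auto
    then have "dim D \<le> dim (span {w})" by (rule dim_subset)
    then show False using dD w0 by simp
  qed
  then obtain v where vD: "v \<in> D" and vw: "v \<notin> span {w}" by blast
  obtain cv where cv: "br a v = cv *s w" using brL2[OF vD] L2w in_span1 by blast
  define z where "z = v - cv *s w"
  have zD: "z \<in> D" unfolding z_def using sD vD wD by (intro subspace_diff subspace_scale)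
  have zw: "z \<notin> span {w}"
  proof
    assume zs: "z \<in> span {w}"
    have "cv *s w \<in> span {w}" by (intro span_scale span_base) simp
    then have "z + cv *s w \<in> span {w}" using zs span_add by blast
    then show False using vw unfolding z_def by simp
  qed
  have z0: "z \<noteq> 0" using zw span_zero[of "{w}"] by metis
  have az: "br a z = 0" unfolding z_def by (simp add: brs cv aw)
  have indzw: "independent {z, w}" using zw w0 independent_insert[of z "{w}"] by auto
  have Dzw: "D = span {z, w}"
  proof -
    have "{z, w} \<subseteq> D" using zD wD by auto
    moreover have "dim D \<le> dim {z, w}"
    proof -
      have "z \<noteq> w" using zw span_base[of w "{w}"] by auto
      then have "card {z, w} = 2" by simp
      then show ?thesis using dD dim_eq_card_independent[OF indzw] by simp
    qed
    ultimately have h: "span {z, w} = span D" by (rule dim_eq_span)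
    have e: "span D = D" using sD by (simp only: span_eq_iff)
    show ?thesis by (simp only: h e)
  qed
  have brzw: "\<forall>x y. br x y \<in> span {z, w}" using brD Dzw by auto
  have Dw: "\<forall>d\<in>D. br d w = 0"
  proof
    fix d assume dD: "d \<in> D"
    have gen: "\<forall>g\<in>{br x y |x y. True}. br g w = 0"
    proof
      fix g assume "g \<in> {br x y |x y. True}"
      then obtain x y where g: "g = br x y" by blast
      obtain px where px: "br x w = px *s w" using brw in_span1 by blast
      obtain py where py: "br y w = py *s w" using brw in_span1 by blast
      have "br x (br y w) + br y (br w x) + br w (br x y) = 0" by (rule jacobi)
      moreover have "br w x = - (px *s w)" using px br_anti[of w x] by simp
      ultimately have "br w (br x y) = 0" by (simp add: px py brs algebra_simps)
      then show "br g w = 0" using g br_anti[of "br x y" w] by simp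
    qed
    show "br d w = 0"
      by (rule hom_zero_on_span[of "\<lambda>d. br d w", OF br_addL br_scaleL gen]) (use dD D_def in auto)
  qed
  have zw0: "br z w = 0" using Dw zD by auto
  have Dz: "\<forall>d\<in>D. br d z = 0"
  proof
    fix d assume "d \<in> D"
    then have "d \<in> span {z, w}" using Dzw by simp
    moreover have "\<forall>s\<in>{z, w}. br s z = 0" using zw0 br_anti[of w z] br_alt by auto
    ultimately show "br d z = 0"
      using hom_zero_on_span[of "\<lambda>d. br d z", OF br_addL br_scaleL, of "{z, w}" d] by simp
  qed
  have zc: "\<forall>y. br y z = 0"
  proof
    fix y
    obtain e where e: "br y z = e *s w" using brL2[OF zD] L2w in_span1 by blast
    have "br y (br a z) + br a (br z y) + br z (br y a) = 0" by (rule jacobi)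
    moreover have "br z (br y a) = 0" using Dz brD br_anti[of z "br y a"] by simp
    moreover have "br z y = - (e *s w)" using e br_anti[of z y] by simp
    ultimately have "e *s w = 0" by (simp add: az brs aw)
    then show "br y z = 0" using e by simp
  qed
  define V0 where "V0 = {k. br k w = 0 \<and> br a k \<in> span {z}}"
  have V0eq: "V0 = {k. br k w = 0} \<inter> {k. br a k \<in> span {z}}" unfolding V0_def by auto
  have sV0: "subspace V0" unfolding V0eq
    by (intro subspace_inter hom_kernel_subspace hom_preimage_subspace br_addL br_scaleL br_addR br_scaleR subspace_span)
  have decomp: "\<forall>y. \<exists>\<phi> s y2. y2 \<in> V0 \<and> y = \<phi> *s a + s *s w + y2"
  proof
    fix y
    obtain \<phi> where ph: "br y w = \<phi> *s w" using brw in_span1 by blast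
    define y1 where "y1 = y - \<phi> *s a"
    have y1w: "br y1 w = 0" unfolding y1_def by (simp add: brs ph aw)
    obtain t s where ts: "br a y1 = t *s z + s *s w" using brzw in_span2 by blast
    define y2 where "y2 = y1 - s *s w"
    have "br y2 w = 0" unfolding y2_def by (simp add: brs y1w)
    moreover have "br a y2 = t *s z" unfolding y2_def by (simp add: brs ts aw)
    ultimately have "y2 \<in> V0" unfolding V0_def by (auto intro: span_scale span_base)
    moreover have "y = \<phi> *s a + s *s w + y2" unfolding y2_def y1_def by simp
    ultimately show "\<exists>\<phi> s y2. y2 \<in> V0 \<and> y = \<phi> *s a + s *s w + y2" by blast
  qed
  have Inv: "Inv z a V0"
    unfolding Inv_def
  proof (intro conjI ballI impI sV0)
    show "z \<in> V0" unfolding V0_def using zw0 az by (auto simp: span_zero)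
  next
    fix k assume "k \<in> V0" then show "br a k \<in> span {z}" unfolding V0_def by auto
  next
    fix k k' assume k: "k \<in> V0" and k': "k' \<in> V0"
    obtain t s where ts: "br k k' = t *s z + s *s w" using brzw in_span2 by blast
    obtain \<alpha> where al: "br a k = \<alpha> *s z" using k unfolding V0_def using in_span1 by blast
    obtain \<beta> where be: "br a k' = \<beta> *s z" using k' unfolding V0_def using in_span1 by blast
    have "br a (br k k') + br k (br k' a) + br k' (br a k) = 0" by (rule jacobi)
    moreover have "br k' a = - (\<beta> *s z)" using be br_anti[of k' a] by simp
    moreover have "br k z = 0" "br k' z = 0" using zc by auto
    ultimately have "br a (br k k') = 0" by (simp add: al brs)
    then have "s *s w = 0" by (simp add: ts brs az aw)
    then have "s = 0" using w0 by simp
    then show "br k k' \<in> span {z}" using ts by (auto intro: span_scale span_base)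
  next
    fix k assume k: "k \<in> V0" and h: "br a k = 0 \<and> (\<forall>k'\<in>V0. br k k' = 0)"
    have kc: "\<forall>y. br k y = 0"
    proof
      fix y
      obtain \<phi> s y2 where y: "y2 \<in> V0" "y = \<phi> *s a + s *s w + y2" using decomp by blast
      have "br k a = 0" using h br_anti[of k a] by simp
      moreover have "br k w = 0" using k unfolding V0_def by simp
      ultimately show "br k y = 0" using h y by (simp add: brs)
    qed
    have "k \<in> span {z, w}" by (rule central_in_span[OF pure brzw kc])
    then obtain t s where ts: "k = t *s z + s *s w" using in_span2 by blast
    have "br a k = s *s w" using ts by (simp add: brs az aw)
    then have "s = 0" using h w0 by simp
    then show "k \<in> span {z}" using ts by (auto intro: span_scale span_base)
  qed
  have brw': "\<forall>x. br x w \<in> span {w}" using brw by simp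
  show ?thesis
    by (rule that[OF w0 z0 zw aw zc brzw brw' V0_def Inv decomp]) (use zD D_def in simp)
qed

end


context lie begin

lemma final:
  assumes pure: "pure_lie scale br" and d1: "dim (lcs scale br 1) = 2"
    and d2: "dim (lcs scale br 2) = 1" and d3: "dim (lcs scale br 3) = 1"
  shows "\<exists>(n::nat) x1 x2 z (zs :: nat \<Rightarrow> 'a). n > 0 \<and>
     (let B = {x1, x2, z} \<union> zs ` {1..n} in
        card B = n + 3 \<and> \<not> module.dependent scale B \<and> module.span scale B = UNIV) \<and>
     br x1 x2 = x1 \<and> br x1 z = 0 \<and> br x2 z = 0 \<and>
     (\<forall>i\<in>{1..n}. br x1 (zs i) = 0 \<and> br (zs i) z = 0) \<and>
     ((even n \<and>
         (\<forall>i\<in>{1..n}. br x2 (zs i) = 0) \<and>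
         (\<forall>i\<in>{1..<n}. odd i \<longrightarrow> br (zs i) (zs (i + 1)) = z) \<and>
         (\<forall>i\<in>{1..n}. \<forall>j\<in>{1..n}. i < j \<and> \<not> (odd i \<and> j = i + 1) \<longrightarrow> br (zs i) (zs j) = 0))
      \<or>
      (odd n \<and>
         br x2 (zs 1) = z \<and>
         (\<forall>i\<in>{2..n}. br x2 (zs i) = 0) \<and>
         (\<forall>i\<in>{2..<n}. even i \<longrightarrow> br (zs i) (zs (i + 1)) = z) \<and>
         (\<forall>i\<in>{1..n}. \<forall>j\<in>{1..n}. i < j \<and> \<not> (even i \<and> j = i + 1) \<longrightarrow> br (zs i) (zs j) = 0)))"
proof -
  obtain a w z V0 where w0: "w \<noteq> 0" and z0: "z \<noteq> 0" and zw: "z \<notin> span {w}" and aw: "br a w = w"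
    and zc: "\<forall>y. br y z = 0" and brzw: "\<forall>x y. br x y \<in> span {z, w}" and brw: "\<forall>x. br x w \<in> span {w}"
    and V0: "V0 = {k. br k w = 0 \<and> br a k \<in> span {z}}" and Inv: "Inv z a V0"
    and decomp: "\<forall>y. \<exists>\<phi> s y2. y2 \<in> V0 \<and> y = \<phi> *s a + s *s w + y2"
    and zD: "z \<in> span {br x y |x y. True}"
    by (rule lie_setup[OF pure d1 d2 d3])
  have sV0: "subspace V0" using Inv unfolding Inv_def by simp
  have "Res z a V0" by (rule main_ind[OF zc z0 Inv])
  then obtain a' m P Q where a'a: "a' - a \<in> V0" and po: "pairsOK z a' V0 m P Q"
    and disj: "V0 = span (insert z (P ` {..<m} \<union> Q ` {..<m})) \<or>
      (\<exists>z1\<in>V0. br a' z1 = - z \<and> (\<forall>j<m. br z1 (P j) = 0 \<and> br z1 (Q j) = 0) \<and>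
       V0 = span (insert z1 (insert z (P ` {..<m} \<union> Q ` {..<m}))))"
    unfolding Res_def by blast
  have V0w: "\<And>k. k \<in> V0 \<Longrightarrow> br k w = 0" using V0 by simp
  have V0w': "br w k = 0" if "k \<in> V0" for k using br_anti[of w k] V0w[OF that] by simp
  have a'w: "br a' w = w"
  proof -
    have "br a' w = br a w + br (a' - a) w" using br_diffL[of a' a w] by simp
    then show ?thesis using aw V0w[OF a'a] by simp
  qed
  define x2 where "x2 = - a'"
  have wx2: "br w x2 = w" unfolding x2_def using a'w br_anti[of w a'] by (simp add: br_negR)
  have x2z: "br x2 z = 0" and wz: "br w z = 0" using zc by auto
  have PQV: "\<forall>j<m. P j \<in> V0 \<and> Q j \<in> V0 \<and> br (P j) (Q j) = z \<and> br a' (P j) = 0 \<and> br a' (Q j) = 0"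
    using po unfolding pairsOK_def by blast
  have cross: "\<forall>j<m. \<forall>k<m. br (P j) (P k) = 0 \<and> br (Q j) (Q k) = 0 \<and> (j \<noteq> k \<longrightarrow> br (P j) (Q k) = 0)"
    using po unfolding pairsOK_def by blast
  have QPc: "br (Q j) (P k) = 0" if "j < m" "k < m" "j \<noteq> k" for j k
    using cross br_anti[of "Q j" "P k"] that by simp
  define G where "G = P ` {..<m} \<union> Q ` {..<m}"
  have GV0: "G \<subseteq> V0" using PQV unfolding G_def by auto
  have Ga': "\<forall>g\<in>G. br a' g = 0" using PQV unfolding G_def by auto
  have finG: "finite G" unfolding G_def by simp
  have spanning: "span X = UNIV" if wX: "w \<in> X" and x2X: "x2 \<in> X" and VX: "V0 \<subseteq> span X" for X
  proof -
    { fix y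
      obtain \<phi> s y2 where y: "y2 \<in> V0" "y = \<phi> *s a + s *s w + y2" using decomp by blast
      have "a = - x2 - (a' - a)" unfolding x2_def by simp
      moreover have "- x2 \<in> span X" using x2X by (intro span_neg span_base)
      moreover have "a' - a \<in> span X" using a'a VX by blast
      ultimately have aX: "a \<in> span X" using span_diff by metis
      have "\<phi> *s a \<in> span X" using aX by (rule span_scale)
      moreover have "s *s w \<in> span X" using wX by (intro span_scale span_base)
      moreover have "y2 \<in> span X" using y VX by blast
      ultimately have "y \<in> span X" unfolding y using span_add by metis }
    then show ?thesis by blast
  qed
  have allw: False if V0z: "V0 = span {z}"
  proof -
    have rep: "\<exists>\<phi> s t. y = \<phi> *s a + s *s w + t *s z" for y
    proof -
      obtain \<phi> s y2 where y: "y2 \<in> V0" "y = \<phi> *s a + s *s w + y2" using decomp by blast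
      obtain t where "y2 = t *s z" using y(1) V0z in_span1 by blast
      then show ?thesis using y by blast
    qed
    have az: "br a z = 0" using zc by simp
    have ax: "br a x \<in> span {w}" for x
    proof -
      obtain \<phi> s t where x: "x = \<phi> *s a + s *s w + t *s z" using rep by blast
      have "br a x = s *s w" unfolding x by (simp add: brs aw az)
      then show ?thesis by (simp add: span_base span_scale)
    qed
    have bxy: "br x y \<in> span {w}" for x y
    proof -
      obtain \<phi> s t where y: "y = \<phi> *s a + s *s w + t *s z" using rep by blast
      have "br x y = - (\<phi> *s br a x) + s *s br x w"
        unfolding y using br_anti[of x a] zc by (simp add: brs)
      moreover have "br a x \<in> span {w}" by (rule ax)
      moreover have "br x w \<in> span {w}" using brw by simp
      ultimately show ?thesis by (simp add: span_diff span_scale)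
    qed
    have "span {br x y |x y. True} \<subseteq> span {w}"
      using bxy by (intro span_minimal) (auto simp: subspace_span)
    then show False using zD zw by blast
  qed
  have x1zs: "br w g = 0 \<and> br g z = 0" if "g \<in> V0" for g using V0w' that zc by simp
  from disj show ?thesis
  proof
    assume V0e: "V0 = span (insert z (P ` {..<m} \<union> Q ` {..<m}))"
    have m0: "m > 0"
    proof (rule ccontr)
      assume "\<not> m > 0" then have "m = 0" by simp
      then show False using allw V0e by simp
    qed
    define zs where "zs i = (if odd i then P (i div 2) else Q (i div 2 - 1))" for i
    have zsG: "zs ` {1..2*m} = G"
    proof
      show "zs ` {1..2*m} \<subseteq> G"
      proof
        fix y assume "y \<in> zs ` {1..2*m}"
        then obtain i where i: "i \<in> {1..2*m}" "y = zs i" by blast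
        show "y \<in> G"
        proof (cases "odd i")
          case True
          then have "i div 2 < m" using i(1)[simplified] by presburger
          then show ?thesis using i True unfolding zs_def G_def by auto
        next
          case False
          then have "i div 2 - 1 < m" using i(1)[simplified] by presburger
          then show ?thesis using i False unfolding zs_def G_def by auto
        qed
      qed
      show "G \<subseteq> zs ` {1..2*m}"
      proof
        fix y assume "y \<in> G"
        then consider j where "j < m" "y = P j" | j where "j < m" "y = Q j" unfolding G_def by blast
        then show "y \<in> zs ` {1..2*m}"
        proof cases
          case (1 j)
          have "zs (2*j+1) = P j" unfolding zs_def by simp
          moreover have "2*j+1 \<in> {1..2*m}" using 1 by simp
          ultimately show ?thesis using 1 by (metis image_eqI)
        next
          case (2 j)
          have "zs (2*j+2) = Q j" unfolding zs_def by simp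
          moreover have "2*j+2 \<in> {1..2*m}" using 2 by simp
          ultimately show ?thesis using 2 by (metis image_eqI)
        qed
      qed
    qed
    have zsV: "\<And>i. i \<in> {1..2*m} \<Longrightarrow> zs i \<in> V0 \<and> br a' (zs i) = 0"
      using zsG GV0 Ga' by blast
    have i1: "independent {z}" using z0 by simp
    have T2a: "\<And>x y. br a' (br a' (x + y)) = br a' (br a' x) + br a' (br a' y)" by (simp add: brs)
    have T2b: "\<And>c x. br a' (br a' (c *s x)) = c *s br a' (br a' x)" by (simp add: brs)
    have i2: "independent (insert w {z}) \<and> w \<notin> {z}"
      by (rule indep_ins[OF i1, of "\<lambda>x. br a' (br a' x)", OF T2a T2b]) (use zc a'w w0 in auto)
    let ?S0 = "insert w {z}"
    have PQS: "\<forall>j<m. \<forall>y\<in>?S0. br (P j) y = 0 \<and> br (Q j) y = 0" using PQV V0w zc by auto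
    have i3: "independent (?S0 \<union> P ` {..<m} \<union> Q ` {..<m}) \<and> card (?S0 \<union> P ` {..<m} \<union> Q ` {..<m}) = card ?S0 + 2 * m"
      by (rule pairs_indep) (use i2 z0 PQV cross PQS in auto)
    let ?S1 = "?S0 \<union> P ` {..<m} \<union> Q ` {..<m}"
    have S1w: "\<forall>y\<in>?S1. br w y = 0"
      using V0w' PQV zc br_alt[of w] by auto
    have i4: "independent (insert x2 ?S1) \<and> x2 \<notin> ?S1"
      by (rule indep_ins[OF conjunct1[OF i3], of "br w"]) (use br_addR br_scaleR S1w wx2 w0 in auto)
    have Beq: "{w, x2, z} \<union> zs ` {1..2*m} = insert x2 ?S1" unfolding zsG G_def by auto
    have cS0: "card ?S0 = 2" using i2 by simp
    have finS1: "finite ?S1" by simp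
    have card: "card ({w, x2, z} \<union> zs ` {1..2*m}) = 2*m + 3"
      unfolding Beq using i3 i4 cS0 finS1 by simp
    have ind: "\<not> dependent ({w, x2, z} \<union> zs ` {1..2*m})" unfolding Beq using i4 by simp
    have spn: "span ({w, x2, z} \<union> zs ` {1..2*m}) = UNIV"
    proof (rule spanning)
      show "V0 \<subseteq> span ({w, x2, z} \<union> zs ` {1..2*m})"
        unfolding V0e zsG G_def by (rule span_mono) auto
    qed auto
    have rel3: "\<forall>i\<in>{1..<2*m}. odd i \<longrightarrow> br (zs i) (zs (i + 1)) = z"
    proof (intro ballI impI)
      fix i assume i: "i \<in> {1..<2*m}" and oi: "odd i"
      have "i div 2 < m" using i[simplified] oi by presburger
      moreover have "(i + 1) div 2 - 1 = i div 2" using oi by presburger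
      ultimately show "br (zs i) (zs (i + 1)) = z" using oi PQV unfolding zs_def by simp
    qed
    have rel4: "\<forall>i\<in>{1..2*m}. \<forall>j\<in>{1..2*m}. i < j \<and> \<not> (odd i \<and> j = i + 1) \<longrightarrow> br (zs i) (zs j) = 0"
    proof (intro ballI impI)
      fix i j assume i: "i \<in> {1..2*m}" and j: "j \<in> {1..2*m}" and ij: "i < j \<and> \<not> (odd i \<and> j = i + 1)"
      consider "odd i" "odd j" | "odd i" "even j" | "even i" "odd j" | "even i" "even j" by blast
      then show "br (zs i) (zs j) = 0"
      proof cases
        case 1
        then have "i div 2 < m" "j div 2 < m" using i[simplified] j[simplified] by presburger+
        then show ?thesis using 1 cross unfolding zs_def by simp
      next
        case 2
        then have "i div 2 < m" "j div 2 - 1 < m" "i div 2 \<noteq> j div 2 - 1" using i[simplified] j[simplified] ij by presburger+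
        then show ?thesis using 2 cross unfolding zs_def by simp
      next
        case 3
        then have "i div 2 - 1 < m" "j div 2 < m" "i div 2 - 1 \<noteq> j div 2" using i[simplified] j[simplified] ij by presburger+
        then show ?thesis using 3 QPc unfolding zs_def by simp
      next
        case 4
        then have "i div 2 - 1 < m" "j div 2 - 1 < m" using i[simplified] j[simplified] by presburger+
        then show ?thesis using 4 cross unfolding zs_def by simp
      qed
    qed
    have rel1: "\<forall>i\<in>{1..2*m}. br w (zs i) = 0 \<and> br (zs i) z = 0" using zsV x1zs by blast
    have rel2: "\<forall>i\<in>{1..2*m}. br x2 (zs i) = 0" using zsV unfolding x2_def by (simp add: br_negL)
    show ?thesis
      apply (rule exI[of _ "2*m"], rule exI[of _ w], rule exI[of _ x2], rule exI[of _ z], rule exI[of _ zs])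
      using m0 card ind spn wx2 wz x2z rel1 rel2 rel3 rel4 by (simp add: Let_def)
  next
    assume "\<exists>z1\<in>V0. br a' z1 = - z \<and> (\<forall>j<m. br z1 (P j) = 0 \<and> br z1 (Q j) = 0) \<and>
       V0 = span (insert z1 (insert z (P ` {..<m} \<union> Q ` {..<m})))"
    then obtain z1 where z1V: "z1 \<in> V0" and a'z1: "br a' z1 = - z"
      and z1PQ: "\<forall>j<m. br z1 (P j) = 0 \<and> br z1 (Q j) = 0"
      and V0e: "V0 = span (insert z1 (insert z (P ` {..<m} \<union> Q ` {..<m})))" by blast
    define zs where "zs i = (if i = 1 then z1 else if even i then P (i div 2 - 1) else Q (i div 2 - 1))" for i
    have zsG: "zs ` {1..2*m+1} = insert z1 G"
    proof
      show "zs ` {1..2*m+1} \<subseteq> insert z1 G"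
      proof
        fix y assume "y \<in> zs ` {1..2*m+1}"
        then obtain i where i: "i \<in> {1..2*m+1}" "y = zs i" by blast
        show "y \<in> insert z1 G"
        proof (cases "i = 1")
          case True then show ?thesis using i unfolding zs_def by simp
        next
          case False
          then have "i div 2 - 1 < m" using i(1)[simplified] by presburger
          then show ?thesis using i False unfolding zs_def G_def by auto
        qed
      qed
      show "insert z1 G \<subseteq> zs ` {1..2*m+1}"
      proof
        fix y assume "y \<in> insert z1 G"
        then consider "y = z1" | j where "j < m" "y = P j" | j where "j < m" "y = Q j" unfolding G_def by blast
        then show "y \<in> zs ` {1..2*m+1}"
        proof cases
          case 1
          have "zs 1 = z1" unfolding zs_def by simp
          moreover have "1 \<in> {1..2*m+1}" by simp
          ultimately show ?thesis using 1 by (metis image_eqI)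
        next
          case (2 j)
          have "zs (2*j+2) = P j" unfolding zs_def by simp
          moreover have "2*j+2 \<in> {1..2*m+1}" using 2 by simp
          ultimately show ?thesis using 2 by (metis image_eqI)
        next
          case (3 j)
          have e3: "(2*j+3) div 2 = j + 1" by presburger
          have "zs (2*j+3) = Q j" unfolding zs_def using e3 by simp
          moreover have "2*j+3 \<in> {1..2*m+1}" using 3 by simp
          ultimately show ?thesis using 3 by (metis image_eqI)
        qed
      qed
    qed
    have zsV: "\<And>i. i \<in> {2..2*m+1} \<Longrightarrow> zs i \<in> G"
    proof -
      fix i assume i: "i \<in> {2..2*m+1}"
      have "i div 2 - 1 < m" using i[simplified] by presburger
      then show "zs i \<in> G" using i unfolding zs_def G_def by auto
    qed
    have i1: "independent {z}" using z0 by simp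
    have i2: "independent (insert z1 {z}) \<and> z1 \<notin> {z}"
      by (rule indep_ins[OF i1, of "br a'"]) (use br_addR br_scaleR zc a'z1 z0 in auto)
    have T2a: "\<And>x y. br a' (br a' (x + y)) = br a' (br a' x) + br a' (br a' y)" by (simp add: brs)
    have T2b: "\<And>c x. br a' (br a' (c *s x)) = c *s br a' (br a' x)" by (simp add: brs)
    have i3: "independent (insert w (insert z1 {z})) \<and> w \<notin> insert z1 {z}"
      by (rule indep_ins[OF conjunct1[OF i2], of "\<lambda>x. br a' (br a' x)", OF T2a T2b])
        (use zc a'w w0 a'z1 br_negR in auto)
    let ?S0 = "insert w (insert z1 {z})"
    have z1P: "\<forall>j<m. br (P j) z1 = 0 \<and> br (Q j) z1 = 0"
    proof (intro allI impI)
      fix j assume "j < m"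
      then show "br (P j) z1 = 0 \<and> br (Q j) z1 = 0"
        using z1PQ br_anti[of "P j" z1] br_anti[of "Q j" z1] by simp
    qed
    have PQS: "\<forall>j<m. \<forall>y\<in>?S0. br (P j) y = 0 \<and> br (Q j) y = 0" using PQV V0w zc z1P by auto
    have i4: "independent (?S0 \<union> P ` {..<m} \<union> Q ` {..<m}) \<and> card (?S0 \<union> P ` {..<m} \<union> Q ` {..<m}) = card ?S0 + 2 * m"
      by (rule pairs_indep) (use i3 z0 PQV cross PQS in auto)
    let ?S1 = "?S0 \<union> P ` {..<m} \<union> Q ` {..<m}"
    have S1w: "\<forall>y\<in>?S1. br w y = 0"
      using V0w' PQV zc br_alt[of w] z1V by auto
    have i5: "independent (insert x2 ?S1) \<and> x2 \<notin> ?S1"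
      by (rule indep_ins[OF conjunct1[OF i4], of "br w"]) (use br_addR br_scaleR S1w wx2 w0 in auto)
    have Beq: "{w, x2, z} \<union> zs ` {1..2*m+1} = insert x2 ?S1" unfolding zsG G_def by auto
    have cS0: "card ?S0 = 3" using i2 i3 by simp
    have finS1: "finite ?S1" by simp
    have card: "card ({w, x2, z} \<union> zs ` {1..2*m+1}) = (2*m+1) + 3"
      unfolding Beq using i4 i5 cS0 finS1 by simp
    have ind: "\<not> dependent ({w, x2, z} \<union> zs ` {1..2*m+1})" unfolding Beq using i5 by simp
    have spn: "span ({w, x2, z} \<union> zs ` {1..2*m+1}) = UNIV"
    proof (rule spanning)
      show "V0 \<subseteq> span ({w, x2, z} \<union> zs ` {1..2*m+1})"
        unfolding V0e zsG G_def by (rule span_mono) auto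
    qed auto
    have rel0: "br x2 (zs 1) = z" unfolding x2_def zs_def using a'z1 by (simp add: br_negL)
    have rel2: "\<forall>i\<in>{2..2*m+1}. br x2 (zs i) = 0" using zsV Ga' unfolding x2_def by (simp add: br_negL)
    have rel1: "\<forall>i\<in>{1..2*m+1}. br w (zs i) = 0 \<and> br (zs i) z = 0"
    proof
      fix i assume i: "i \<in> {1..2*m+1}"
      have "zs i \<in> zs ` {1..2*m+1}" using i by (rule imageI)
      then have "zs i \<in> V0" using zsG GV0 z1V by auto
      then show "br w (zs i) = 0 \<and> br (zs i) z = 0" using x1zs by blast
    qed
    have rel3: "\<forall>i\<in>{2..<2*m+1}. even i \<longrightarrow> br (zs i) (zs (i + 1)) = z"
    proof (intro ballI impI)
      fix i assume i: "i \<in> {2..<2*m+1}" and ei: "even i"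
      have "i div 2 - 1 < m" using i[simplified] ei by presburger
      moreover have "(i + 1) div 2 - 1 = i div 2 - 1" using ei by presburger
      moreover have "i \<noteq> 1" "i + 1 \<noteq> 1" using i by auto
      ultimately show "br (zs i) (zs (i + 1)) = z" using ei PQV unfolding zs_def by simp
    qed
    have rel4: "\<forall>i\<in>{1..2*m+1}. \<forall>j\<in>{1..2*m+1}. i < j \<and> \<not> (even i \<and> j = i + 1) \<longrightarrow> br (zs i) (zs j) = 0"
    proof (intro ballI impI)
      fix i j assume i: "i \<in> {1..2*m+1}" and j: "j \<in> {1..2*m+1}" and ij: "i < j \<and> \<not> (even i \<and> j = i + 1)"
      show "br (zs i) (zs j) = 0"
      proof (cases "i = 1")
        case True
        have "zs j \<in> G" using j ij True by (intro zsV) auto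
        then show ?thesis using True z1PQ unfolding G_def zs_def by auto
      next
        case False
        then have i2': "i \<ge> 2" "j \<ge> 3" "j \<noteq> 1" using i ij by auto
        consider "even i" "even j" | "even i" "odd j" | "odd i" "even j" | "odd i" "odd j" by blast
        then show ?thesis
        proof cases
          case 1
          then have "i div 2 - 1 < m" "j div 2 - 1 < m" using i[simplified] j[simplified] i2' by presburger+
          then show ?thesis using 1 cross False i2' unfolding zs_def by simp
        next
          case 2
          then have "i div 2 - 1 < m" "j div 2 - 1 < m" "i div 2 - 1 \<noteq> j div 2 - 1" using i[simplified] j[simplified] ij False by presburger+
          then show ?thesis using 2 cross False i2' unfolding zs_def by simp
        next
          case 3
          then have "i div 2 - 1 < m" "j div 2 - 1 < m" "i div 2 - 1 \<noteq> j div 2 - 1" using i[simplified] j[simplified] ij False by presburger+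
          then show ?thesis using 3 QPc False i2' unfolding zs_def by simp
        next
          case 4
          then have "i div 2 - 1 < m" "j div 2 - 1 < m" using i[simplified] j[simplified] i2' by presburger+
          then show ?thesis using 4 cross False i2' unfolding zs_def by simp
        qed
      qed
    qed
    show ?thesis
      apply (rule exI[of _ "2*m+1"], rule exI[of _ w], rule exI[of _ x2], rule exI[of _ z], rule exI[of _ zs])
      using card ind spn wx2 wz x2z rel0 rel1 rel2 rel3 rel4 by (simp add: Let_def)
  qed
qed

end

theorem theorem3p4:
  fixes sc :: "complex \<Rightarrow> 'a::ab_group_add \<Rightarrow> 'a"
    and br :: "'a \<Rightarrow> 'a \<Rightarrow> 'a"
  assumes "lie_algebra sc br"
    and "fin_dim sc"
    and "pure_lie sc br"
    and "\<not> nilpotent_lie sc br"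
    and "solvable_lie sc br"
    and "breadth sc br = 2"
    and "vector_space.dim sc (lcs sc br 1) = 2"
    and "\<forall>k\<ge>2. vector_space.dim sc (lcs sc br k) = 1"
  shows "\<exists>(n::nat) x1 x2 z (zs :: nat \<Rightarrow> 'a). n > 0 \<and>
     (let B = {x1, x2, z} \<union> zs ` {1..n} in
        card B = n + 3 \<and> \<not> module.dependent sc B \<and> module.span sc B = UNIV) \<and>
     br x1 x2 = x1 \<and> br x1 z = 0 \<and> br x2 z = 0 \<and>
     (\<forall>i\<in>{1..n}. br x1 (zs i) = 0 \<and> br (zs i) z = 0) \<and>
     ((even n \<and>
         (\<forall>i\<in>{1..n}. br x2 (zs i) = 0) \<and>
         (\<forall>i\<in>{1..<n}. odd i \<longrightarrow> br (zs i) (zs (i + 1)) = z) \<and>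
         (\<forall>i\<in>{1..n}. \<forall>j\<in>{1..n}. i < j \<and> \<not> (odd i \<and> j = i + 1) \<longrightarrow> br (zs i) (zs j) = 0))
      \<or>
      (odd n \<and>
         br x2 (zs 1) = z \<and>
         (\<forall>i\<in>{2..n}. br x2 (zs i) = 0) \<and>
         (\<forall>i\<in>{2..<n}. even i \<longrightarrow> br (zs i) (zs (i + 1)) = z) \<and>
         (\<forall>i\<in>{1..n}. \<forall>j\<in>{1..n}. i < j \<and> \<not> (even i \<and> j = i + 1) \<longrightarrow> br (zs i) (zs j) = 0)))"
proof -
  have vs: "vector_space sc" and linR: "\<forall>x. Vector_Spaces.linear sc sc (br x)"
    and linL: "\<forall>y. Vector_Spaces.linear sc sc (\<lambda>x. br x y)" and alt: "\<forall>x. br x x = 0"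
    and jac: "\<forall>x y z. br x (br y z) + br y (br z x) + br z (br x y) = 0"
    using assms(1) unfolding lie_algebra_def by auto
  interpret V: vector_space sc by (rule vs)
  obtain B0 where B0: "finite B0" "V.span B0 = UNIV" using assms(2) unfolding fin_dim_def by blast
  obtain Bs where Bs: "Bs \<subseteq> B0" "V.independent Bs" "B0 \<subseteq> V.span Bs"
    using V.maximal_independent_subset[of B0] by blast
  have finBs: "finite Bs" using Bs(1) B0(1) by (rule finite_subset)
  have "V.span B0 \<subseteq> V.span Bs" using V.span_mono[OF Bs(3)] by (simp only: V.span_span)
  then have spBs: "V.span Bs = UNIV" using B0(2) by auto
  have lR: "(\<forall>u v. br x (u + v) = br x u + br x v) \<and> (\<forall>c u. br x (sc c u) = sc c (br x u))" for x
    using Vector_Spaces.linear_iff[THEN iffD1, OF linR[rule_format, of x]] by simp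
  have lL: "(\<forall>u v. br (u + v) y = br u y + br v y) \<and> (\<forall>c u. br (sc c u) y = sc c (br u y))" for y
    using Vector_Spaces.linear_iff[THEN iffD1, OF linL[rule_format, of y]] by simp
  have L: "lie sc Bs br"
  proof (rule lie.intro)
    show "finite_dimensional_vector_space sc Bs"
      by (rule finite_dimensional_vector_space.intro[OF vs]) (rule finite_dimensional_vector_space_axioms.intro[OF finBs Bs(2) spBs])
    show "lie_axioms sc br"
    proof (rule lie_axioms.intro)
      show "\<And>x y y'. br x (y + y') = br x y + br x y'" using lR by blast
      show "\<And>x c y. br x (sc c y) = sc c (br x y)" using lR by blast
      show "\<And>x x' y. br (x + x') y = br x y + br x' y" using lL by blast
      show "\<And>c x y. br (sc c x) y = sc c (br x y)" using lL by blast
      show "\<And>x. br x x = 0" using alt by blast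
      show "\<And>x y t. br x (br y t) + br y (br t x) + br t (br x y) = 0" using jac by blast
    qed
  qed
  interpret L: lie sc Bs br by (rule L)
  have d2: "vector_space.dim sc (lcs sc br 2) = 1" using assms(8) by simp
  have d3: "vector_space.dim sc (lcs sc br 3) = 1" using assms(8) by simp
  show ?thesis by (rule L.final[OF assms(3) assms(7) d2 d3])
qed

end
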